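(* Let $\mathbf U$ be a real $3\times3$ positive-definite symmetric matrix, let $\hat{\mathbf e}\in\mathbb R^3$ with $|\hat{\mathbf e}|=1$, and define $\hat{\mathbf U}=(-\mathbf I+2\hat{\mathbf e}\otimes\hat{\mathbf e})\mathbf U(-\mathbf I+2\hat{\mathbf e}\otimes\hat{\mathbf e})$. Let $\hat{\mathbf R}\in\mathrm{SO}(3)$ and $\mathbf a,\mathbf n\in\mathbb R^3$ with $\mathbf a\neq 0$, $\mathbf n\neq0$ satisfy $\hat{\mathbf R}\hat{\mathbf U}=\mathbf U+\mathbf a\otimes\mathbf n$. Then the equation $$\mathbf R\big[f(\mathbf U+\mathbf a\otimes\mathbf n)+(1-f)\mathbf U\big]-\mathbf I=\mathbf b\otimes\mathbf m$$ has a solution $\mathbf R\in\mathrm{SO}(3)$, $\mathbf b,\mathbf m\in\mathbb R^3$ for each $f\in[0,1]$ if and only if the following three conditions hold: (CC1) $\lambda_2=1$, where $\lambda_2$ is the middle eigenvalue of $\mathbf U$; (CC2) $\mathbf a\cdot\mathbf U\,\mathrm{cof}(\mathbf U^2-\mathbf I)\,\mathbf n=0$; (CC3) $\mathrm{tr}\,\mathbf U^2-\det\mathbf U^2-\frac{|\mathbf a|^2|\mathbf n|^2}{4}-2\ge 0$.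
   Context: $\mathbf a\otimes\mathbf n$ denotes the matrix with $(\mathbf a\otimes\mathbf n)\mathbf x=(\mathbf n\cdot\mathbf x)\mathbf a$. For a $3\times3$ matrix $\mathbf A$, $\mathrm{cof}\,\mathbf A$ is its cofactor matrix, $(\mathrm{cof}\,\mathbf A)_{ij}=(-1)^{i+j}\det\hat{\mathbf A}_{ij}$, where $\hat{\mathbf A}_{ij}$ is the submatrix obtained by deleting row $i$ and column $j$. Conditions (CC1)–(CC3) are called the cofactor conditions. *)

theory Defs
  imports "HOL-Analysis.Analysis"
begin

definition tensor :: "real^'n \<Rightarrow> real^'m \<Rightarrow> real^'m^'n" where
  "tensor a n = (\<chi> i j. a $ i * n $ j)"

definition SO3 :: "(real^3^3) set" where
  "SO3 = {R. orthogonal_matrix R \<and> det R = 1}"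

definition minor2 :: "real^3^3 \<Rightarrow> 3 \<Rightarrow> 3 \<Rightarrow> 3 \<Rightarrow> 3 \<Rightarrow> real" where
  "minor2 A r1 r2 c1 c2 = A$r1$c1 * A$r2$c2 - A$r1$c2 * A$r2$c1"

definition cof3 :: "real^3^3 \<Rightarrow> real^3^3" where
  "cof3 A = vector [
     vector [  minor2 A 2 3 2 3, - minor2 A 2 3 1 3,   minor2 A 2 3 1 2],
     vector [- minor2 A 1 3 2 3,   minor2 A 1 3 1 3, - minor2 A 1 3 1 2],
     vector [  minor2 A 1 2 2 3, - minor2 A 1 2 1 3,   minor2 A 1 2 1 2]]"

definition middle_eigenvalue :: "real^3^3 \<Rightarrow> real" where
  "middle_eigenvalue U = (THE l2. \<exists>l1 l3. l1 \<le> l2 \<and> l2 \<le> l3 \<and>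
      (\<forall>t. det (U - mat t) = (l1 - t) * (l2 - t) * (l3 - t)))"

definition sym_posdef :: "real^3^3 \<Rightarrow> bool" where
  "sym_posdef U \<longleftrightarrow> transpose U = U \<and> (\<forall>x. x \<noteq> 0 \<longrightarrow> x \<bullet> (U *v x) > 0)"

end

theory Submission
  imports Defs
begin
definition sig2 :: "real^3^3 \<Rightarrow> real" where
 "sig2 M = M$1$1*M$2$2 - M$1$2*M$2$1 + M$1$1*M$3$3 - M$1$3*M$3$1 + M$2$2*M$3$3 - M$2$3*M$3$2"
definition crs :: "real^3 \<Rightarrow> real^3 \<Rightarrow> real^3" where
 "crs x y = vector [x$2*y$3 - x$3*y$2, x$3*y$1 - x$1*y$3, x$1*y$2 - x$2*y$1]"
lemmas M3 = vec_eq_iff forall_3 sum_3 matrix_matrix_mult_def matrix_vector_mult_def inner_vec_def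
   det_3 mat_def tensor_def transpose_def trace_def sig2_def crs_def cof3_def minor2_def vector_3

lemma symE: assumes "transpose M = (M::real^3^3)"
  shows "M$2$1 = M$1$2" "M$3$1 = M$1$3" "M$3$2 = M$2$3"
proof -
  have "(transpose M)$1$2 = M$1$2" "(transpose M)$1$3 = M$1$3" "(transpose M)$2$3 = M$2$3"
    using assms by simp_all
  then show "M$2$1 = M$1$2" "M$3$1 = M$1$3" "M$3$2 = M$2$3" by (simp_all add: transpose_def)
qed

lemma char3: "det (M - mat s) = trace M * s ^ 2 - s ^ 3 - sig2 M * s + det (M::real^3^3)"
  by (simp add: M3 power2_eq_square power3_eq_cube algebra_simps)






lemma sym_param: assumes "transpose M = (M::real^3^3)"
  obtains a b c d e f where "M = vector[vector[a,b,c],vector[b,d,e],vector[c,e,f]]"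
proof -
  have "M = vector[vector[M$1$1,M$1$2,M$1$3],vector[M$1$2,M$2$2,M$2$3],vector[M$1$3,M$2$3,M$3$3]]"
    using symE[OF assms] by (simp add: vec_eq_iff forall_3)
  then show ?thesis using that by blast
qed

lemma vec_param: obtains x1 x2 x3 where "(v::real^3) = vector[x1,x2,x3]"
proof -
  have "v = vector[v$1,v$2,v$3]" by (simp add: vec_eq_iff forall_3)
  then show ?thesis using that by blast
qed

lemma binet: assumes "transpose M = (M::real^3^3)"
  shows "crs p q \<bullet> (cof3 M *v crs p q) = (p \<bullet> (M *v p)) * (q \<bullet> (M *v q)) - (p \<bullet> (M *v q))^2"
proof -
  obtain a b c d e f where 1: "M = vector[vector[a,b,c],vector[b,d,e],vector[c,e,f]]" using sym_param[OF assms] .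
  obtain p1 p2 p3 where 2: "p = vector[p1,p2,p3]" using vec_param .
  obtain q1 q2 q3 where 3: "q = vector[q1,q2,q3]" using vec_param .
  show ?thesis unfolding 1 2 3 by (simp add: M3 power2_eq_square) algebra
qed

lemma adjugate: "transpose (cof3 M) ** M = det M *\<^sub>R mat 1"
proof -
  obtain a b c where 1: "M$1 = vector[a,b,c]" using vec_param .
  obtain d e f where 2: "M$2 = vector[d,e,f]" using vec_param .
  obtain g h i where 3: "M$3 = vector[g,h,i]" using vec_param .
  show ?thesis by (simp add: M3 1 2 3) algebra
qed

lemma det_id_tensor: "det (mat 1 + tensor x n) = 1 + x \<bullet> (n::real^3)"
proof -
  obtain x1 x2 x3 where 1: "x = vector[x1,x2,x3]" using vec_param .
  obtain n1 n2 n3 where 2: "n = vector[n1,n2,n3]" using vec_param .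
  show ?thesis unfolding 1 2 by (simp add: M3) algebra
qed

lemma cof_null: assumes "transpose M = (M::real^3^3)" "M *v z = 0"
  shows "z \<bullet> (cof3 M *v z) = sig2 M * (z \<bullet> z)"
proof -
  obtain a b c d e f where 1: "M = vector[vector[a,b,c],vector[b,d,e],vector[c,e,f]]" using sym_param[OF assms(1)] .
  obtain z1 z2 z3 where 2: "z = vector[z1,z2,z3]" using vec_param .
  have e: "a*z1 + b*z2 + c*z3 = 0" "b*z1 + d*z2 + e*z3 = 0" "c*z1 + e*z2 + f*z3 = 0"
    using assms(2) unfolding 1 2 by (simp_all add: M3)
  have "z1 * ((d*f - e*e)*z1 + (e*c - b*f)*z2 + (b*e-d*c)*z3) + z2 * ((c*e-b*f)*z1 + (a*f-c*c)*z2 + (b*c-a*e)*z3)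
     + z3 * ((b*e-c*d)*z1 + (c*b-a*e)*z2 + (a*d-b*b)*z3) = (a*d - b*b + a*f - c*c + d*f - e*e)*(z1*z1+z2*z2+z3*z3)"
    using e by algebra
  then show ?thesis unfolding 1 2 by (simp add: M3 algebra_simps)
qed

lemma GD: assumes "transpose D = (D::real^3^3)"
  shows "det (D + tensor n v + tensor v n) = det D + 2 * (v \<bullet> (cof3 D *v n)) - crs n v \<bullet> (D *v crs n v)"
proof -
  obtain a b c d e f where 1: "D = vector[vector[a,b,c],vector[b,d,e],vector[c,e,f]]" using sym_param[OF assms(1)] .
  obtain n1 n2 n3 where 2: "n = vector[n1,n2,n3]" using vec_param .
  obtain v1 v2 v3 where 3: "v = vector[v1,v2,v3]" using vec_param .
  show ?thesis unfolding 1 2 3 by (simp add: M3) algebra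
qed

lemma GS: assumes "transpose D = (D::real^3^3)"
  shows "sig2 (D + tensor n v + tensor v n) = sig2 D + 2 * trace D * (n \<bullet> v) - 2 * (n \<bullet> (D *v v)) - crs n v \<bullet> crs n v"
proof -
  obtain a b c d e f where 1: "D = vector[vector[a,b,c],vector[b,d,e],vector[c,e,f]]" using sym_param[OF assms(1)] .
  obtain n1 n2 n3 where 2: "n = vector[n1,n2,n3]" using vec_param .
  obtain v1 v2 v3 where 3: "v = vector[v1,v2,v3]" using vec_param .
  show ?thesis unfolding 1 2 3 by (simp add: M3) algebra
qed

lemma rank1_gram:
  fixes b m :: "real^3"
  defines "G \<equiv> mat 1 + tensor b m"
  shows "det (transpose G ** G - mat 1) = 0"
    "sig2 (transpose G ** G - mat 1) \<le> 0"
proof -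
  obtain b1 b2 b3 where 2: "b = vector[b1,b2,b3]" using vec_param .
  obtain m1 m2 m3 where 3: "m = vector[m1,m2,m3]" using vec_param .
  show "det (transpose G ** G - mat 1) = 0" unfolding G_def 2 3 by (simp add: M3) algebra
  define bb where "bb = b1*b1+b2*b2+b3*b3"
  define w1 where "w1 = 2*b1 + bb*m1"
  define w2 where "w2 = 2*b2 + bb*m2"
  define w3 where "w3 = 2*b3 + bb*m3"
  have "4 * sig2 (transpose G ** G - mat 1) = - ((m1*w2 - m2*w1)^2 + (m1*w3 - m3*w1)^2 + (m2*w3-m3*w2)^2)"
    unfolding G_def 2 3 w1_def w2_def w3_def bb_def by (simp add: M3 power2_eq_square) algebra
  moreover have "(m1*w2 - m2*w1)^2 + (m1*w3 - m3*w1)^2 + (m2*w3-m3*w2)^2 \<ge> 0" by simp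
  ultimately show "sig2 (transpose G ** G - mat 1) \<le> 0" by linarith
qed

lemma bj1:
  assumes "R \<in> SO3" "R ** F - mat 1 = tensor b m"
  shows "det (transpose F ** F - mat 1) = 0 \<and> sig2 (transpose F ** F - mat 1) \<le> 0"
proof -
  have RR: "transpose R ** R = mat 1" using assms(1) by (simp add: SO3_def orthogonal_matrix)
  have G: "R ** F = mat 1 + tensor b m" using assms(2) by (metis diff_add_cancel add.commute)
  have "transpose (R ** F) ** (R ** F) = transpose F ** (transpose R ** R) ** F"
    by (simp add: matrix_transpose_mul matrix_mul_assoc)
  then have "transpose F ** F = transpose (mat 1 + tensor b m) ** (mat 1 + tensor b m)"
    using RR G by simp
  then show ?thesis using rank1_gram[of b m] by simp
qed

lemma kernel3: assumes "det (A::real^3^3) = 0" obtains x where "x \<noteq> 0" "A *v x = 0"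
proof -
  have "rank A < CARD(3)" using assms det_eq_0_rank by blast
  then have "rank A \<noteq> CARD(3)" by simp
  then show ?thesis using matrix_nonfull_linear_equations_eq that by blast
qed

definition perp :: "real^3 \<Rightarrow> real^3" where
 "perp z = (if z$1 = 0 \<and> z$2 = 0 then vector[1,0,0] else vector[- z$2, z$1, 0])"

lemma perp: "perp z \<noteq> 0" "z \<bullet> perp z = 0"
  by (auto simp: perp_def M3)

lemma crs_facts:
  "z \<bullet> crs z y = 0" "y \<bullet> crs z y = 0" "crs y (crs z y) = (y \<bullet> y) *\<^sub>R z - (y \<bullet> z) *\<^sub>R y"
  "crs z y \<bullet> crs z y = (z \<bullet> z) * (y \<bullet> y) - (z \<bullet> y)^2"
proof -
  obtain z1 z2 z3 where 1: "z = vector[z1,z2,z3]" using vec_param .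
  obtain y1 y2 y3 where 2: "y = vector[y1,y2,y3]" using vec_param .
  show "z \<bullet> crs z y = 0" unfolding 1 2 by (simp add: M3) algebra
  show "y \<bullet> crs z y = 0" unfolding 1 2 by (simp add: M3) algebra
  show "crs y (crs z y) = (y \<bullet> y) *\<^sub>R z - (y \<bullet> z) *\<^sub>R y" unfolding 1 2 by (simp add: M3) algebra+
  show "crs z y \<bullet> crs z y = (z \<bullet> z) * (y \<bullet> y) - (z \<bullet> y)^2" unfolding 1 2 by (simp add: M3 power2_eq_square) algebra
qed

lemma sym_dot: assumes "transpose D = (D::real^3^3)" shows "x \<bullet> (D *v y) = y \<bullet> (D *v x)"
proof -
  obtain a b c d e f where 1: "D = vector[vector[a,b,c],vector[b,d,e],vector[c,e,f]]" using sym_param[OF assms(1)] .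
  show ?thesis unfolding 1 by (simp add: M3) algebra
qed

lemma gram_dot: "x \<bullet> ((transpose G ** G) *v y) = (G *v x) \<bullet> (G *v (y::real^3))" for G :: "real^3^3"
  by (simp add: M3 algebra_simps)

lemma PXP: "(P ** X ** transpose P) $ i $ j = P $ i \<bullet> (X *v (P $ j))" for P X :: "real^3^3"
  by (simp add: M3 algebra_simps)

lemma tensor_mv: "tensor b m *v x = (m \<bullet> x) *\<^sub>R b" for b m x :: "real^3"
  by (simp add: M3 algebra_simps)

lemma quad_iso: fixes A B C :: real assumes "A * C - B^2 \<le> 0"
  obtains s t where "s \<noteq> 0 \<or> t \<noteq> 0" "A * s^2 + 2 * B * s * t + C * t^2 = 0"
proof (cases "A = 0")
  case True then show ?thesis using that[of 1 0] by simp
next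
  case False
  define r where "r = sqrt (B^2 - A*C)"
  have r2: "r^2 = B^2 - A*C" unfolding r_def using assms by simp
  have "A * (- B + r)^2 + 2 * B * (- B + r) * A + C * A^2 = A * (r^2 - B^2 + A * C)"
    by (simp add: power2_eq_square algebra_simps)
  also have "\<dots> = 0" using r2 by simp
  finally show ?thesis using that[of "- B + r" A] False by blast
qed

lemma PPt: "(P ** transpose P) $ i $ j = P $ i \<bullet> P $ j" for P :: "real^3^3"
  by (simp add: M3 algebra_simps)

lemma transpose_diff3: "transpose (A - B) = transpose A - transpose (B::real^3^3)"
  by (simp add: M3)

lemma bj2:
  fixes F :: "real^3^3"
  assumes dF: "det F > 0"
    and d0: "det (transpose F ** F - mat 1) = 0"
    and s0: "sig2 (transpose F ** F - mat 1) \<le> 0"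
  shows "\<exists>R\<in>SO3. \<exists>b m. R ** F - mat 1 = tensor b m"
proof -
  define C where "C = transpose F ** F"
  define D where "D = C - mat 1"
  have symC: "transpose C = C" by (simp add: C_def matrix_transpose_mul)
  have symD: "transpose D = D" using symC by (simp add: D_def transpose_diff3)
  have Cv: "C *v y = D *v y + y" for y by (simp add: D_def matrix_vector_mult_diff_rdistrib)
  obtain z where z: "z \<noteq> 0" "D *v z = 0" using kernel3 d0 unfolding D_def C_def by blast
  have zD: "z \<bullet> (D *v x) = 0" for x using sym_dot[OF symD, of z x] z(2) by simp
  define y1 where "y1 = perp z"
  define y2 where "y2 = crs z y1"
  have zy1: "z \<bullet> y1 = 0" "y1 \<noteq> 0" using perp unfolding y1_def by auto
  have zy2: "z \<bullet> y2 = 0" "y1 \<bullet> y2 = 0" using crs_facts unfolding y2_def by auto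
  have y2y2: "y2 \<bullet> y2 = (z \<bullet> z) * (y1 \<bullet> y1)" using crs_facts(4)[of z y1] zy1 by (simp add: y2_def)
  have c12: "crs y1 y2 = (y1 \<bullet> y1) *\<^sub>R z" using crs_facts(3)[of y1 z] zy1 by (simp add: y2_def inner_commute)
  have zz: "z \<bullet> z > 0" using z(1) by simp
  have y11: "y1 \<bullet> y1 > 0" using zy1(2) by simp
  define A where "A = y1 \<bullet> (D *v y1)"
  define B where "B = y1 \<bullet> (D *v y2)"
  define Cc where "Cc = y2 \<bullet> (D *v y2)"
  have "A * Cc - B^2 = crs y1 y2 \<bullet> (cof3 D *v crs y1 y2)"
    using binet[OF symD, of y1 y2] by (simp add: A_def B_def Cc_def)
  also have "\<dots> = (y1 \<bullet> y1)^2 * (z \<bullet> (cof3 D *v z))"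
    by (simp add: c12 matrix_vector_mult_scaleR power2_eq_square)
  also have "\<dots> = (y1 \<bullet> y1)^2 * (sig2 D * (z \<bullet> z))" using cof_null[OF symD z(2)] by simp
  finally have "A * Cc - B^2 \<le> 0" using s0 zz unfolding D_def C_def
    by (simp add: mult_nonneg_nonpos mult_nonpos_nonneg)
  then obtain s t where st: "s \<noteq> 0 \<or> t \<noteq> 0" "A * s^2 + 2 * B * s * t + Cc * t^2 = 0"
    using quad_iso by blast
  define w where "w = s *\<^sub>R y1 + t *\<^sub>R y2"
  have ww: "w \<bullet> w = s^2 * (y1 \<bullet> y1) + t^2 * (y2 \<bullet> y2)"
    using zy2 by (simp add: w_def inner_add_left inner_add_right inner_commute power2_eq_square)
  have wpos: "w \<bullet> w > 0"
  proof -
    have "y2 \<bullet> y2 > 0" using y2y2 zz y11 by simp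
    then show ?thesis unfolding ww using st(1) y11
      by (auto intro: add_pos_nonneg add_nonneg_pos)
  qed
  have zw: "z \<bullet> w = 0" using zy1 zy2 by (simp add: w_def inner_add_right)
  have wDw: "w \<bullet> (D *v w) = 0"
  proof -
    have "y2 \<bullet> (D *v y1) = B" using sym_dot[OF symD, of y2 y1] by (simp add: B_def)
    then have "w \<bullet> (D *v w) = A * s^2 + 2 * B * s * t + Cc * t^2"
      by (simp add: w_def matrix_vector_right_distrib matrix_vector_mult_scaleR inner_add_left
           inner_add_right A_def B_def Cc_def power2_eq_square algebra_simps)
    then show ?thesis using st(2) by simp
  qed
  define m where "m = crs z w"
  have mm: "m \<bullet> m = (z \<bullet> z) * (w \<bullet> w)" using crs_facts(4)[of z w] zw by (simp add: m_def)
  have mpos: "m \<bullet> m > 0" using mm zz wpos by simp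
  have zm: "z \<bullet> m = 0" and wm: "w \<bullet> m = 0" using crs_facts by (auto simp: m_def)
  have wz: "w \<bullet> z = 0" and mz: "m \<bullet> z = 0" and mw: "m \<bullet> w = 0" using zw zm wm by (simp_all add: inner_commute)
  define P :: "real^3^3" where "P = vector[z, w, m]"
  have P123: "P$1 = z" "P$2 = w" "P$3 = m" by (simp_all add: P_def)
  define q where "q = w \<bullet> (D *v m)"
  define \<gamma> where "\<gamma> = m \<bullet> (C *v m)"
  have PCP: "P ** C ** transpose P = vector[vector[z \<bullet> z, 0, 0], vector[0, w \<bullet> w, q], vector[0, q, \<gamma>]]"
  proof -
    have "m \<bullet> (D *v w) = q" using sym_dot[OF symD, of m w] by (simp add: q_def)
    then show ?thesis
      by (simp add: vec_eq_iff forall_3 PXP P123 Cv inner_add_right zD zw zm wm wz mz mw wDw q_def \<gamma>_def z(2))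
  qed
  have PP: "P ** transpose P = vector[vector[z \<bullet> z, 0, 0], vector[0, w \<bullet> w, 0], vector[0, 0, m \<bullet> m]]"
    by (simp add: vec_eq_iff forall_3 PPt P123 zw zm wm wz mz mw)
  have "det (P ** transpose P) = det P * det P" by (simp add: det_mul)
  moreover have "det (P ** transpose P) = (z \<bullet> z) * (w \<bullet> w) * (m \<bullet> m)"
    unfolding PP by (simp add: det_3)
  ultimately have "det P * det P = (z \<bullet> z) * (w \<bullet> w) * (m \<bullet> m)" by simp
  then have dP: "det P * det P > 0" using zz wpos mpos by simp
  have dC: "det C > 0" using dF by (simp add: C_def det_mul)
  have "det (P ** C ** transpose P) = det P * det P * det C" by (simp add: det_mul)
  moreover have "det (P ** C ** transpose P) = (z \<bullet> z) * ((w \<bullet> w) * \<gamma> - q * q)"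
    unfolding PCP by (simp add: det_3 algebra_simps)
  ultimately have "(z \<bullet> z) * ((w \<bullet> w) * \<gamma> - q * q) > 0" using dP dC by simp
  then have key: "(w \<bullet> w) * \<gamma> - q^2 > 0" using zz by (simp add: zero_less_mult_iff power2_eq_square)
  define \<rho> where "\<rho> = (\<gamma> - q^2 / (w \<bullet> w)) / (m \<bullet> m)"
  have rpos: "\<rho> > 0" using key wpos mpos unfolding \<rho>_def by (simp add: field_simps)
  define \<beta> where "\<beta> = q / ((m \<bullet> m) * (w \<bullet> w))"
  define \<kappa> where "\<kappa> = (sqrt \<rho> - 1) / (m \<bullet> m)"
  define b where "b = \<beta> *\<^sub>R w + \<kappa> *\<^sub>R m"
  define G where "G = mat 1 + tensor b m"
  have Gx: "G *v x = x + (m \<bullet> x) *\<^sub>R b" for x by (simp add: G_def matrix_vector_mult_add_rdistrib tensor_mv)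
  have Gz: "G *v z = z" using zm Gx[of z] by (simp add: inner_commute)
  have Gw: "G *v w = w" using wm Gx[of w] by (simp add: inner_commute)
  have Gm: "G *v m = ((m \<bullet> m) * \<beta>) *\<^sub>R w + sqrt \<rho> *\<^sub>R m"
  proof -
    have mk: "(m \<bullet> m) * \<kappa> = sqrt \<rho> - 1" using mpos by (simp add: \<kappa>_def)
    have "G *v m = m + (m \<bullet> m) *\<^sub>R b" using Gx[of m] by simp
    also have "\<dots> = ((m \<bullet> m) * \<beta>) *\<^sub>R w + (1 + (m \<bullet> m) * \<kappa>) *\<^sub>R m"
      by (simp add: b_def scaleR_add_right scaleR_add_left)
    finally show ?thesis using mk by simp
  qed
  have s\<rho>: "sqrt \<rho> ^ 2 = \<rho>" using rpos by simp
  have e23: "w \<bullet> (G *v m) = q" using Gm wm wpos mpos by (simp add: inner_add_right \<beta>_def)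
  have e33: "(G *v m) \<bullet> (G *v m) = \<gamma>"
  proof -
    have "(G *v m) \<bullet> (G *v m) = ((m \<bullet> m) * \<beta>)^2 * (w \<bullet> w) + \<rho> * (m \<bullet> m)"
      using Gm wm s\<rho> by (simp add: inner_add_left inner_add_right inner_commute power2_eq_square algebra_simps)
    also have "\<dots> = \<gamma>" using wpos mpos by (simp add: \<beta>_def \<rho>_def field_simps power2_eq_square)
    finally show ?thesis .
  qed
  have PGP: "P ** (transpose G ** G) ** transpose P = vector[vector[z \<bullet> z, 0, 0], vector[0, w \<bullet> w, q], vector[0, q, \<gamma>]]"
  proof -
    have "z \<bullet> (G *v m) = 0" using Gm zw zm by (simp add: inner_add_right)
    moreover have "(G *v m) \<bullet> w = q" "(G *v m) \<bullet> z = 0" using e23 \<open>z \<bullet> (G *v m) = 0\<close> by (simp_all add: inner_commute)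
    ultimately show ?thesis
      by (simp add: vec_eq_iff forall_3 PXP P123 gram_dot Gz Gw e23 e33 zw zm wm wz mz mw)
  qed
  obtain Pi where Pi: "Pi ** P = mat 1"
    using dP invertible_det_nz[of P] invertible_left_inverse by (metis mult_zero_left less_irrefl)
  have PiT: "transpose P ** transpose Pi = mat 1" using Pi by (metis matrix_transpose_mul transpose_mat)
  have canc: "X = Pi ** (P ** X ** transpose P) ** transpose Pi" for X
    by (simp add: matrix_mul_assoc[symmetric] PiT) (simp add: matrix_mul_assoc Pi)
  have GG: "transpose G ** G = C" using canc[of "transpose G ** G"] canc[of C] PGP PCP by simp
  have dG: "det G = sqrt \<rho>"
    using det_id_tensor[of b m] mpos by (simp add: G_def b_def inner_add_left mw wm \<kappa>_def)
  obtain Fi where Fi: "F ** Fi = mat 1" "Fi ** F = mat 1"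
    using dF invertible_det_nz[of F] unfolding invertible_def by auto
  define R where "R = G ** Fi"
  have RF: "R ** F = G" by (simp add: R_def matrix_mul_assoc[symmetric] Fi(2))
  have RR: "transpose R ** R = mat 1"
  proof -
    have "transpose R ** R = transpose Fi ** (transpose G ** G) ** Fi"
      by (simp add: R_def matrix_transpose_mul matrix_mul_assoc)
    also have "\<dots> = transpose (F ** Fi) ** (F ** Fi)"
      by (simp add: GG C_def matrix_transpose_mul matrix_mul_assoc)
    finally show ?thesis by (simp add: Fi(1))
  qed
  have oR: "orthogonal_matrix R" using RR by (simp add: orthogonal_matrix)
  have "det F * det Fi = 1" using arg_cong[OF Fi(1), of det] by (simp add: det_mul)
  then have "det Fi > 0" using dF by (metis zero_less_mult_pos zero_less_one)
  then have "det R > 0" using dG rpos by (simp add: R_def det_mul)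
  then have "det R = 1" using det_orthogonal_matrix[OF oR] by auto
  then have "R \<in> SO3" using oR by (simp add: SO3_def)
  moreover have "R ** F - mat 1 = tensor b m" using RF by (simp add: G_def)
  ultimately show ?thesis by blast
qed

lemma cubic_root: fixes c2 c1 c0 :: real
  shows "\<exists>x. c2 * x^2 - x^3 - c1 * x + c0 = 0"
proof -
  define K where "K = \<bar>c2\<bar> + \<bar>c1\<bar> + \<bar>c0\<bar>"
  define T where "T = K + 1"
  have K0: "K \<ge> 0" unfolding K_def by simp
  have T1: "T \<ge> 1" unfolding T_def using K0 by simp
  have TT: "T \<le> T^2" "1 \<le> T^2"
    using T1 mult_left_mono[of 1 T T] one_le_power[of T 2] by (simp_all add: power2_eq_square)
  have a1: "c2 * T^2 \<le> \<bar>c2\<bar> * T^2" by (simp add: mult_right_mono)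
  have a2: "- c1 * T \<le> \<bar>c1\<bar> * T^2"
  proof -
    have "- c1 * T \<le> \<bar>c1\<bar> * T" using T1 mult_right_mono[of "- c1" "\<bar>c1\<bar>" T] by simp
    also have "\<dots> \<le> \<bar>c1\<bar> * T^2" using TT by (simp add: mult_left_mono)
    finally show ?thesis .
  qed
  have c0a: "\<bar>c0\<bar> \<le> \<bar>c0\<bar> * T^2" using TT mult_left_mono[of 1 "T^2" "\<bar>c0\<bar>"] by simp
  have a3: "c0 \<le> \<bar>c0\<bar> * T^2" using c0a abs_ge_self[of c0] by linarith
  have b1: "- \<bar>c2\<bar> * T^2 \<le> c2 * T^2" using mult_right_mono[of "- \<bar>c2\<bar>" c2 "T^2"] by simp
  have b2: "- \<bar>c1\<bar> * T^2 \<le> c1 * T"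
  proof -
    have "- \<bar>c1\<bar> * T^2 \<le> - \<bar>c1\<bar> * T" using TT by (simp add: mult_left_mono)
    also have "\<dots> \<le> c1 * T" using T1 mult_right_mono[of "- \<bar>c1\<bar>" c1 T] by simp
    finally show ?thesis .
  qed
  have b3: "- \<bar>c0\<bar> * T^2 \<le> c0" using c0a abs_ge_minus_self[of c0] by linarith
  have T3: "T^3 = T * T^2" by (simp add: power2_eq_square power3_eq_cube)
  have "c2 * T^2 - T^3 - c1 * T + c0 \<le> K * T^2 - T * T^2" using a1 a2 a3 T3 unfolding K_def
    by (simp add: algebra_simps)
  also have "\<dots> = -(T^2)" unfolding T_def by (simp add: algebra_simps)
  finally have up: "c2 * T^2 - T^3 - c1 * T + c0 \<le> 0" using zero_le_power2[of T] by linarith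
  have "c2 * (-T)^2 - (-T)^3 - c1 * (-T) + c0 = c2 * T^2 + T * T^2 + c1 * T + c0"
    by (simp add: power2_eq_square power3_eq_cube)
  also have "\<dots> \<ge> T * T^2 - K * T^2" using b1 b2 b3 unfolding K_def by (simp add: algebra_simps)
  finally have "c2 * (-T)^2 - (-T)^3 - c1 * (-T) + c0 \<ge> T * T^2 - K * T^2" .
  moreover have "T * T^2 - K * T^2 = T^2" unfolding T_def by (simp add: algebra_simps)
  ultimately have lo: "c2 * (-T)^2 - (-T)^3 - c1 * (-T) + c0 \<ge> 0" using zero_le_power2[of T] by linarith
  have cont: "continuous_on {-T..T} (\<lambda>x. c2 * x^2 - x^3 - c1 * x + c0)"
    by (intro continuous_intros)
  show ?thesis using IVT2'[of "\<lambda>x. c2 * x^2 - x^3 - c1 * x + c0" T 0 "-T", OF up lo _ cont] T1 by auto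
qed

lemma dot_transpose: "x \<bullet> (transpose A *v y) = (A *v x) \<bullet> y" for A :: "real^3^3"
  by (simp add: M3 algebra_simps)

lemma mat_mv: "mat k *v x = k *\<^sub>R (x::real^3)"
  by (simp add: M3)

lemma vstar_quad: "x \<bullet> (x v* A) = x \<bullet> (A *v x)" for A :: "real^3^3"
  by (simp add: M3 vector_matrix_mult_def algebra_simps)

lemma smat_mv: "(c *\<^sub>R A) *v x = c *\<^sub>R (A *v x)" for A :: "real^3^3"
  by (simp add: M3 algebra_simps)

lemma eig_cof: assumes "M *v z = \<mu> *\<^sub>R z" shows "det M * (z \<bullet> z) = \<mu> * (z \<bullet> (cof3 M *v z))"
proof -
  have "z \<bullet> ((transpose (cof3 M) ** M) *v z) = det M * (z \<bullet> z)"
    by (simp add: adjugate smat_mv mat_mv)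
  moreover have "z \<bullet> ((transpose (cof3 M) ** M) *v z) = \<mu> * (z \<bullet> (cof3 M *v z))"
    by (simp add: matrix_vector_mul_assoc[symmetric] assms matrix_vector_mult_scaleR vstar_quad)
  ultimately show ?thesis by simp
qed

lemma sym_minus_mat: "transpose U = U \<Longrightarrow> transpose (U - mat t) = U - mat (t::real)" for U :: "real^3^3"
  by (simp add: transpose_diff3)

lemma factor_sym:
  fixes U :: "real^3^3" assumes symU: "transpose U = U"
  shows "\<exists>l1 l2 l3. l1 \<le> l2 \<and> l2 \<le> l3 \<and> (\<forall>t. det (U - mat t) = (l1 - t) * (l2 - t) * (l3 - t))"
proof -
  obtain lam where "trace U * lam^2 - lam^3 - sig2 U * lam + det U = 0" using cubic_root by blast
  then have "det (U - mat lam) = 0" by (simp add: char3)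
  then obtain z where z: "z \<noteq> 0" "(U - mat lam) *v z = 0" using kernel3 by blast
  have Uz: "U *v z = lam *\<^sub>R z" using z(2) by (simp add: matrix_vector_mult_diff_rdistrib mat_mv)
  define y1 where "y1 = perp z"
  define y2 where "y2 = crs z y1"
  have zy1: "z \<bullet> y1 = 0" "y1 \<noteq> 0" using perp unfolding y1_def by auto
  have zy2: "z \<bullet> y2 = 0" "y1 \<bullet> y2 = 0" using crs_facts unfolding y2_def by auto
  have y2y2: "y2 \<bullet> y2 = (z \<bullet> z) * (y1 \<bullet> y1)" using crs_facts(4)[of z y1] zy1 by (simp add: y2_def)
  have c12: "crs y1 y2 = (y1 \<bullet> y1) *\<^sub>R z" using crs_facts(3)[of y1 z] zy1 by (simp add: y2_def inner_commute)
  have zz: "z \<bullet> z > 0" using z(1) by simp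
  have N1: "y1 \<bullet> y1 > 0" using zy1(2) by simp
  define A where "A = y1 \<bullet> (U *v y1)"
  define B where "B = y1 \<bullet> (U *v y2)"
  define Cc where "Cc = y2 \<bullet> (U *v y2)"
  define N2 where "N2 = y2 \<bullet> y2"
  have N2p: "N2 > 0" using y2y2 zz N1 by (simp add: N2_def)
  define a' where "a' = A / (y1 \<bullet> y1)"
  define c' where "c' = Cc / N2"
  define bb where "bb = B^2 / ((y1 \<bullet> y1) * N2)"
  define \<Delta> where "\<Delta> = ((a' - c') / 2)^2 + bb"
  have \<Delta>0: "\<Delta> \<ge> 0" unfolding \<Delta>_def bb_def using N1 N2p by simp
  define r1 where "r1 = (a' + c') / 2 - sqrt \<Delta>"
  define r2 where "r2 = (a' + c') / 2 + sqrt \<Delta>"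
  have r12: "r1 \<le> r2" unfolding r1_def r2_def using \<Delta>0 by simp
  have fac: "det (U - mat t) = (lam - t) * (r1 - t) * (r2 - t)" for t
  proof -
    define M where "M = U - mat t"
    have symM: "transpose M = M" unfolding M_def using symU by (rule sym_minus_mat)
    have Mv: "M *v y = U *v y - t *\<^sub>R y" for y by (simp add: M_def matrix_vector_mult_diff_rdistrib mat_mv)
    have Mz: "M *v z = (lam - t) *\<^sub>R z" by (simp add: Mv Uz algebra_simps)
    have e1: "det M * (z \<bullet> z) = (lam - t) * (z \<bullet> (cof3 M *v z))" using eig_cof[OF Mz] .
    have "(y1 \<bullet> y1)^2 * (z \<bullet> (cof3 M *v z)) = crs y1 y2 \<bullet> (cof3 M *v crs y1 y2)"
      by (simp add: c12 matrix_vector_mult_scaleR power2_eq_square)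
    also have "\<dots> = (y1 \<bullet> (M *v y1)) * (y2 \<bullet> (M *v y2)) - (y1 \<bullet> (M *v y2))^2" by (rule binet[OF symM])
    also have "\<dots> = (A - t * (y1 \<bullet> y1)) * (Cc - t * N2) - B^2"
      by (simp add: Mv inner_diff_right A_def B_def Cc_def N2_def zy2)
    also have "\<dots> = (y1 \<bullet> y1) * N2 * ((a' - t) * (c' - t) - bb)"
      using N1 N2p by (simp add: a'_def c'_def bb_def field_simps)
    also have "(a' - t) * (c' - t) - bb = (r1 - t) * (r2 - t)"
    proof -
      have "(r1 - t) * (r2 - t) = ((a' + c') / 2 - t)^2 - (sqrt \<Delta>)^2"
        by (simp add: r1_def r2_def power2_eq_square field_simps)
      also have "\<dots> = (a' - t) * (c' - t) - bb" using \<Delta>0 by (simp add: \<Delta>_def power2_eq_square field_simps)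
      finally show ?thesis by simp
    qed
    finally have e2: "(y1 \<bullet> y1)^2 * (z \<bullet> (cof3 M *v z)) = (y1 \<bullet> y1) * N2 * ((r1 - t) * (r2 - t))" .
    have "det M * ((y1 \<bullet> y1) * N2) = det M * (z \<bullet> z) * (y1 \<bullet> y1)^2"
      by (simp add: N2_def y2y2 power2_eq_square)
    also have "\<dots> = (lam - t) * (z \<bullet> (cof3 M *v z)) * (y1 \<bullet> y1)^2" using e1 by simp
    also have "\<dots> = (lam - t) * ((y1 \<bullet> y1)^2 * (z \<bullet> (cof3 M *v z)))" by (simp add: ac_simps)
    also have "\<dots> = (lam - t) * ((y1 \<bullet> y1) * N2 * ((r1 - t) * (r2 - t)))" by (simp add: e2)
    finally have "det M * ((y1 \<bullet> y1) * N2) = ((lam - t) * (r1 - t) * (r2 - t)) * ((y1 \<bullet> y1) * N2)"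
      by (simp add: algebra_simps)
    then show ?thesis using N1 N2p by (simp add: M_def)
  qed
  show ?thesis
  proof (cases "lam \<le> r1")
    case True then show ?thesis using r12 fac by (intro exI[of _ lam] exI[of _ r1] exI[of _ r2]) auto
  next
    case False
    show ?thesis
    proof (cases "lam \<le> r2")
      case True then show ?thesis using False r12 fac
        by (intro exI[of _ r1] exI[of _ lam] exI[of _ r2]) (auto simp: algebra_simps)
    next
      case False2: False
      then show ?thesis using False r12 fac
        by (intro exI[of _ r1] exI[of _ r2] exI[of _ lam]) (auto simp: algebra_simps)
    qed
  qed
qed


lemma root_ge_min: fixes k1 k2 k3 x :: real
  assumes "k1 \<le> k2" "k2 \<le> k3" "(k1 - x) * (k2 - x) * (k3 - x) = 0"
  shows "k1 \<le> x \<and> x \<le> k3"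
  using assms by auto

lemma middle_unique:
  fixes l1 l2 l3 k1 k2 k3 :: real
  assumes "l1 \<le> l2" "l2 \<le> l3" "k1 \<le> k2" "k2 \<le> k3"
    and eq: "\<forall>t. (l1 - t) * (l2 - t) * (l3 - t) = (k1 - t) * (k2 - t) * (k3 - t)"
  shows "l2 = k2"
proof -
  have "(k1 - l1) * (k2 - l1) * (k3 - l1) = 0" using eq[rule_format, of l1] by simp
  then have a: "k1 \<le> l1" using root_ge_min assms by blast
  have "(l1 - k1) * (l2 - k1) * (l3 - k1) = 0" using eq[rule_format, of k1] by simp
  then have b: "l1 \<le> k1" using root_ge_min assms by blast
  have "(k1 - l3) * (k2 - l3) * (k3 - l3) = 0" using eq[rule_format, of l3] by simp
  then have c: "l3 \<le> k3" using root_ge_min assms by blast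
  have "(l1 - k3) * (l2 - k3) * (l3 - k3) = 0" using eq[rule_format, of k3] by simp
  then have d: "k3 \<le> l3" using root_ge_min assms by blast
  have s: "l1 + l2 + l3 = k1 + k2 + k3"
  proof -
    have e0: "l1 * l2 * l3 = k1 * k2 * k3" using eq[rule_format, of 0] by simp
    have e1: "(l1 - 1) * (l2 - 1) * (l3 - 1) = (k1 - 1) * (k2 - 1) * (k3 - 1)" using eq by blast
    have e2: "(l1 - -1) * (l2 - -1) * (l3 - -1) = (k1 - -1) * (k2 - -1) * (k3 - -1)" using eq by blast
    have "2*(l1*l2*l3) + 2*(l1+l2+l3) = (l1 - 1) * (l2 - 1) * (l3 - 1) + (l1 - -1) * (l2 - -1) * (l3 - -1)"
      by algebra
    also have "\<dots> = (k1 - 1) * (k2 - 1) * (k3 - 1) + (k1 - -1) * (k2 - -1) * (k3 - -1)" using e1 e2 by simp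
    also have "\<dots> = 2*(k1*k2*k3) + 2*(k1+k2+k3)" by algebra
    finally show ?thesis using e0 by simp
  qed
  show ?thesis using a b c d s by linarith
qed

lemma middle_eig:
  assumes "l1 \<le> l2" "l2 \<le> l3" "\<forall>t. det (U - mat t) = (l1 - t) * (l2 - t) * (l3 - t)"
  shows "middle_eigenvalue U = l2"
  unfolding middle_eigenvalue_def
proof (rule the_equality)
  show "\<exists>l1' l3'. l1' \<le> l2 \<and> l2 \<le> l3' \<and> (\<forall>t. det (U - mat t) = (l1' - t) * (l2 - t) * (l3' - t))"
    using assms by blast
next
  fix k2 assume "\<exists>k1 k3. k1 \<le> k2 \<and> k2 \<le> k3 \<and> (\<forall>t. det (U - mat t) = (k1 - t) * (k2 - t) * (k3 - t))"
  then obtain k1 k3 where k: "k1 \<le> k2" "k2 \<le> k3" "\<forall>t. det (U - mat t) = (k1 - t) * (k2 - t) * (k3 - t)" by blast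
  show "k2 = l2" using middle_unique[OF k(1,2) assms(1,2)] k(3) assms(3) by simp
qed

lemma posdef_eig: assumes "sym_posdef U" "det (U - mat l) = 0" shows "l > 0"
proof -
  obtain x where x: "x \<noteq> 0" "(U - mat l) *v x = 0" using kernel3 assms(2) by blast
  have "U *v x = l *\<^sub>R x" using x(2) by (simp add: matrix_vector_mult_diff_rdistrib mat_mv)
  then have "x \<bullet> (U *v x) = l * (x \<bullet> x)" by simp
  moreover have "x \<bullet> (U *v x) > 0" using assms(1) x(1) by (simp add: sym_posdef_def)
  moreover have "x \<bullet> x > 0" using x(1) by simp
  ultimately show ?thesis by (metis zero_less_mult_pos2)
qed

lemma sq_fact: "(U - mat r) ** (U - mat (- r)) = U ** U - mat (r^2)" for U :: "real^3^3"
  by (simp add: M3 algebra_simps power2_eq_square)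

lemma mat_add3: "mat a + mat b = (mat (a + b) :: real^3^3)" by (simp add: M3)

lemma cubic_expand: fixes a b c s :: real
  shows "(a - s) * (b - s) * (c - s) = (a + b + c) * s^2 - s^3 - (a*b + a*c + b*c) * s + a*b*c"
  by (simp add: power2_eq_square power3_eq_cube algebra_simps)


lemma sorted_mid: fixes m1 m2 m3 :: real assumes "m1 \<le> m2" "m2 \<le> m3"
  shows "m2 = 0 \<longleftrightarrow> m1 * m2 * m3 = 0 \<and> m1 * m2 + m1 * m3 + m2 * m3 \<le> 0"
proof
  assume "m2 = 0"
  then show "m1 * m2 * m3 = 0 \<and> m1 * m2 + m1 * m3 + m2 * m3 \<le> 0"
    using assms by (simp add: mult_nonpos_nonneg)
next
  assume h: "m1 * m2 * m3 = 0 \<and> m1 * m2 + m1 * m3 + m2 * m3 \<le> 0"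
  then have "m1 = 0 \<or> m2 = 0 \<or> m3 = 0" by simp
  then show "m2 = 0"
  proof (elim disjE)
    assume "m1 = 0"
    then have "m2 * m3 \<le> 0" "m2 \<ge> 0" "m3 \<ge> 0" using h assms by auto
    moreover have "m2 * m3 \<ge> 0" using \<open>m2 \<ge> 0\<close> \<open>m3 \<ge> 0\<close> by (simp add: mult_nonneg_nonneg)
    ultimately have "m2 * m3 = 0" by linarith
    then show "m2 = 0" using \<open>m2 \<ge> 0\<close> assms by auto
  next
    assume "m3 = 0"
    then have "m1 * m2 \<le> 0" "m1 \<le> 0" "m2 \<le> 0" using h assms by auto
    moreover have "m1 * m2 \<ge> 0" using \<open>m1 \<le> 0\<close> \<open>m2 \<le> 0\<close> by (simp add: mult_nonpos_nonpos)
    ultimately have "m1 * m2 = 0" by linarith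
    then show "m2 = 0" using \<open>m2 \<le> 0\<close> assms by auto
  qed simp
qed

lemma lin_solve: fixes T \<sigma> d e1 e2 e3 :: real
  assumes "T * 9 - 27 - \<sigma> * 3 + d = e1 * 9 - 27 - e2 * 3 + e3"
    "T * 64 - 512 - \<sigma> * 8 + d = e1 * 64 - 512 - e2 * 8 + e3" "d = e3"
  shows "\<sigma> = e2" using assms by linarith

lemma ME:
  fixes U :: "real^3^3"
  assumes pd: "sym_posdef U"
  shows "det U > 0"
    and "middle_eigenvalue U = 1 \<longleftrightarrow> det (U ** U - mat 1) = 0 \<and> sig2 (U ** U - mat 1) \<le> 0"
proof -
  have symU: "transpose U = U" using pd by (simp add: sym_posdef_def)
  obtain l1 l2 l3 where l: "l1 \<le> l2" "l2 \<le> l3" and fa: "\<forall>t. det (U - mat t) = (l1 - t) * (l2 - t) * (l3 - t)"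
    using factor_sym[OF symU] by blast
  have p1: "l1 > 0" using posdef_eig[OF pd] fa by simp
  have p2: "l2 > 0" using posdef_eig[OF pd] fa by simp
  have p3: "l3 > 0" using posdef_eig[OF pd] fa by simp
  show "det U > 0" using fa[rule_format, of 0] p1 p2 p3 by simp
  have mid: "middle_eigenvalue U = l2" using middle_eig[OF l fa] .
  define m1 where "m1 = l1^2 - 1"
  define m2 where "m2 = l2^2 - 1"
  define m3 where "m3 = l3^2 - 1"
  have m12: "m1 \<le> m2" unfolding m1_def m2_def using l p1 by (simp add: power_mono)
  have m23: "m2 \<le> m3" unfolding m2_def m3_def using l p2 by (simp add: power_mono)
  have ev: "det (U ** U - mat 1 - mat s) = (m1 - s) * (m2 - s) * (m3 - s)" if "s = r^2 - 1" for s r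
  proof -
    have "U ** U - mat 1 - mat s = U ** U - mat (r^2)" using that by (simp add: diff_diff_eq mat_add3)
    also have "\<dots> = (U - mat r) ** (U - mat (- r))" by (simp add: sq_fact)
    finally have "det (U ** U - mat 1 - mat s) = det (U - mat r) * det (U - mat (- r))" by (simp add: det_mul)
    also have "\<dots> = ((l1 - r) * (l2 - r) * (l3 - r)) * ((l1 - - r) * (l2 - - r) * (l3 - - r))"
      using fa by simp
    also have "\<dots> = (m1 - s) * (m2 - s) * (m3 - s)"
      unfolding m1_def m2_def m3_def that by algebra
    finally show ?thesis .
  qed
  define M0 where "M0 = U ** U - mat 1"
  have E0: "det M0 = m1 * m2 * m3" using ev[of 0 1] by (simp add: M0_def)
  have d3: "det (M0 - mat 3) = (m1 - 3) * (m2 - 3) * (m3 - 3)" using ev[of 3 2] by (simp add: M0_def)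
  have d8: "det (M0 - mat 8) = (m1 - 8) * (m2 - 8) * (m3 - 8)" using ev[of 8 3] by (simp add: M0_def)
  have E3: "trace M0 * 3^2 - 3^3 - sig2 M0 * 3 + det M0 = (m1 + m2 + m3) * 3^2 - 3^3 - (m1*m2 + m1*m3 + m2*m3) * 3 + m1*m2*m3"
    using char3[of M0 3] cubic_expand[where s=3 and a=m1 and b=m2 and c=m3] d3 by linarith
  have E8: "trace M0 * 8^2 - 8^3 - sig2 M0 * 8 + det M0 = (m1 + m2 + m3) * 8^2 - 8^3 - (m1*m2 + m1*m3 + m2*m3) * 8 + m1*m2*m3"
    using char3[of M0 8] cubic_expand[where s=8 and a=m1 and b=m2 and c=m3] d8 by linarith
  have E3': "trace M0 * 9 - 27 - sig2 M0 * 3 + det M0 = (m1 + m2 + m3) * 9 - 27 - (m1*m2 + m1*m3 + m2*m3) * 3 + m1*m2*m3"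
    using E3 by simp
  have E8': "trace M0 * 64 - 512 - sig2 M0 * 8 + det M0 = (m1 + m2 + m3) * 64 - 512 - (m1*m2 + m1*m3 + m2*m3) * 8 + m1*m2*m3"
    using E8 by simp
  have S: "sig2 M0 = m1*m2 + m1*m3 + m2*m3" using lin_solve[OF E3' E8' E0] .
  have "m2 = (l2 - 1) * (l2 + 1)" by (simp add: m2_def power2_eq_square algebra_simps)
  then have "l2 = 1 \<longleftrightarrow> m2 = 0" using p2 by simp
  then have "middle_eigenvalue U = 1 \<longleftrightarrow> m2 = 0" using mid by simp
  also have "\<dots> \<longleftrightarrow> m1*m2*m3 = 0 \<and> m1*m2+m1*m3+m2*m3 \<le> 0" by (rule sorted_mid[OF m12 m23])
  also have "\<dots> \<longleftrightarrow> det M0 = 0 \<and> sig2 M0 \<le> 0" using E0 S by simp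
  finally show "middle_eigenvalue U = 1 \<longleftrightarrow> det (U ** U - mat 1) = 0 \<and> sig2 (U ** U - mat 1) \<le> 0"
    unfolding M0_def .
qed

lemma Q_sq: fixes e :: "real^3"
  shows "(- mat 1 + 2 *\<^sub>R tensor e e) ** (- mat 1 + 2 *\<^sub>R tensor e e) = mat 1 + (4 * (e \<bullet> e - 1)) *\<^sub>R tensor e e"
proof -
  obtain e1 e2 e3 where 1: "e = vector[e1,e2,e3]" using vec_param .
  show ?thesis unfolding 1 by (simp add: M3) algebra
qed

lemma Q_sym: "transpose (- mat 1 + 2 *\<^sub>R tensor e e) = (- mat 1 + 2 *\<^sub>R tensor e e :: real^3^3)"
  by (simp add: M3 mult.commute)

lemma coef_eq: assumes "\<forall>s. det (A - mat s) = det (B - mat s)"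
  shows "det A = det B" "sig2 A = sig2 (B::real^3^3)"
proof -
  have e0: "det A = det B" using assms[rule_format, of 0] by simp
  have e1: "trace A * 1^2 - 1^3 - sig2 A * 1 + det A = trace B * 1^2 - 1^3 - sig2 B * 1 + det B"
    using assms[rule_format, of 1] by (simp only: char3)
  have e2: "trace A * (-1)^2 - (-1)^3 - sig2 A * (-1) + det A = trace B * (-1)^2 - (-1)^3 - sig2 B * (-1) + det B"
    using assms[rule_format, of "-1"] by (simp only: char3)
  show "det A = det B" by (rule e0)
  show "sig2 A = sig2 B" using e0 e1 e2 by simp
qed

lemma mdl: "A ** (B - C) = A ** B - A ** C" for A B C :: "real^3^3"
  by (simp add: M3 algebra_simps)
lemma mdr: "(B - C) ** A = B ** A - C ** A" for A B C :: "real^3^3"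
  by (simp add: M3 algebra_simps)
lemma mmat: "A ** mat s = s *\<^sub>R A" "mat s ** A = s *\<^sub>R A" for A :: "real^3^3"
  by (simp_all add: M3 algebra_simps)
lemma msc: "(s *\<^sub>R A) ** B = s *\<^sub>R (A ** B)" "A ** (s *\<^sub>R B) = s *\<^sub>R (A ** B)" for A B :: "real^3^3"
  by (simp_all add: M3 algebra_simps sum_distrib_left)
lemma smat: "s *\<^sub>R mat 1 = (mat s :: real^3^3)" by (simp add: M3)

lemma conj_char: fixes M Q :: "real^3^3" assumes "Q ** Q = mat 1"
  shows "det (Q ** M ** Q - mat s) = det (M - mat s)"
proof -
  have "Q ** (M - mat s) ** Q = Q ** M ** Q - s *\<^sub>R (Q ** Q)"
    by (simp add: mdl mdr mmat msc)
  then have "Q ** M ** Q - mat s = Q ** (M - mat s) ** Q" by (simp add: assms smat)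
  then have "det (Q ** M ** Q - mat s) = det Q * det (M - mat s) * det Q" by (simp add: det_mul)
  moreover have "det Q * det Q = 1" using arg_cong[OF assms, of det] by (simp add: det_mul)
  ultimately show ?thesis by (metis mult.commute mult.left_commute mult.right_neutral)
qed

lemma Cf: fixes U :: "real^3^3" and a n :: "real^3" and f :: real
  assumes "transpose U = U"
  defines "v \<equiv> f *\<^sub>R (U *v a) + (f^2 * (a \<bullet> a) / 2) *\<^sub>R n"
  shows "transpose (U + f *\<^sub>R tensor a n) ** (U + f *\<^sub>R tensor a n) - mat 1 = (U ** U - mat 1) + tensor n v + tensor v n"
proof -
  obtain p q r s t w where 1: "U = vector[vector[p,q,r],vector[q,s,t],vector[r,t,w]]" using sym_param[OF assms(1)] .
  obtain a1 a2 a3 where 2: "a = vector[a1,a2,a3]" using vec_param .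
  obtain n1 n2 n3 where 3: "n = vector[n1,n2,n3]" using vec_param .
  show ?thesis unfolding v_def 1 2 3 by (simp add: M3 power2_eq_square field_simps)
qed

lemma crs_lin: "crs n (x *\<^sub>R y + z *\<^sub>R n) = x *\<^sub>R crs n y"
  by (simp add: M3 algebra_simps)

lemma g_expand: fixes D :: "real^3^3" and n u :: "real^3" and f \<alpha> :: real
  assumes symD: "transpose D = D"
  defines "v \<equiv> f *\<^sub>R u + (f^2 * \<alpha> / 2) *\<^sub>R n"
  shows "det (D + tensor n v + tensor v n) = det D + f * (2 * (u \<bullet> (cof3 D *v n)))
      + f^2 * (\<alpha> * (n \<bullet> (cof3 D *v n)) - crs n u \<bullet> (D *v crs n u))"
proof -
  have c: "crs n v = f *\<^sub>R crs n u" unfolding v_def by (rule crs_lin)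
  show ?thesis unfolding GD[OF symD] c
    by (simp add: v_def inner_add_left matrix_vector_mult_scaleR power2_eq_square algebra_simps)
qed

lemma h_expand: fixes D :: "real^3^3" and n u :: "real^3" and f \<alpha> :: real
  assumes symD: "transpose D = D"
  defines "v \<equiv> f *\<^sub>R u + (f^2 * \<alpha> / 2) *\<^sub>R n"
  shows "sig2 (D + tensor n v + tensor v n) = sig2 D + f * (2 * trace D * (n \<bullet> u) - 2 * (n \<bullet> (D *v u)))
      + f^2 * (\<alpha> * trace D * (n \<bullet> n) - \<alpha> * (n \<bullet> (D *v n)) - crs n u \<bullet> crs n u)"
proof -
  have c: "crs n v = f *\<^sub>R crs n u" unfolding v_def by (rule crs_lin)
  show ?thesis unfolding GS[OF symD] c
    by (simp add: v_def inner_add_right matrix_vector_right_distrib matrix_vector_mult_scaleR power2_eq_square algebra_simps)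
qed

lemma cof_rank1: fixes D :: "real^3^3" assumes "transpose D = D"
  shows "n \<bullet> (cof3 (D - t *\<^sub>R tensor u u) *v n) = n \<bullet> (cof3 D *v n) - t * (crs n u \<bullet> (D *v crs n u))"
proof -
  obtain p q r s w x where 1: "D = vector[vector[p,q,r],vector[q,s,w],vector[r,w,x]]" using sym_param[OF assms(1)] .
  obtain a1 a2 a3 where 2: "u = vector[a1,a2,a3]" using vec_param .
  obtain n1 n2 n3 where 3: "n = vector[n1,n2,n3]" using vec_param .
  show ?thesis unfolding 1 2 3 by (simp add: M3) algebra
qed

lemma tr_rank1: fixes D :: "real^3^3"
  shows "(n \<bullet> n) * trace (D - t *\<^sub>R tensor u u) - n \<bullet> ((D - t *\<^sub>R tensor u u) *v n)
     = (n \<bullet> n) * trace D - n \<bullet> (D *v n) - t * (crs n u \<bullet> crs n u)"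
proof -
  obtain a1 a2 a3 where 2: "u = vector[a1,a2,a3]" using vec_param .
  obtain n1 n2 n3 where 3: "n = vector[n1,n2,n3]" using vec_param .
  show ?thesis unfolding 2 3 by (simp add: M3) algebra
qed

lemma tr_frame: fixes M :: "real^3^3" assumes "transpose M = M"
  shows "crs n x \<bullet> (M *v crs n x) = ((n \<bullet> n) * (x \<bullet> x) - (n \<bullet> x)^2) * trace M - (x \<bullet> x) * (n \<bullet> (M *v n))
     - (n \<bullet> n) * (x \<bullet> (M *v x)) + 2 * (n \<bullet> x) * (n \<bullet> (M *v x))"
proof -
  obtain p q r s w y where 1: "M = vector[vector[p,q,r],vector[q,s,w],vector[r,w,y]]" using sym_param[OF assms(1)] .
  obtain a1 a2 a3 where 2: "x = vector[a1,a2,a3]" using vec_param .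
  obtain n1 n2 n3 where 3: "n = vector[n1,n2,n3]" using vec_param .
  show ?thesis unfolding 1 2 3 by (simp add: M3 power2_eq_square) algebra
qed

lemma cc3_id: "sig2 (S - mat 1) = det S - trace S + 2 - det (S - mat 1)" for S :: "real^3^3"
  by (simp add: M3 algebra_simps)

lemma sym_rank1: fixes D :: "real^3^3" assumes "transpose D = D"
  shows "transpose (D - t *\<^sub>R tensor u u) = D - t *\<^sub>R tensor u u"
  using symE[OF assms] by (simp add: M3 mult.commute)

lemma sym_sq: fixes U :: "real^3^3" assumes "transpose U = U"
  shows "transpose (U ** U - mat 1) = U ** U - mat 1"
  using assms by (simp add: transpose_diff3 matrix_transpose_mul)

lemma key_h2:
  fixes U :: "real^3^3" and a n x :: "real^3"
  assumes symU: "transpose U = U" and Ux: "U *v x = a" and nx: "n \<bullet> x = 0" and a0: "a \<noteq> 0"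
    and g2: "(a \<bullet> a) * (n \<bullet> (cof3 (U ** U - mat 1) *v n))
        - crs n (U *v a) \<bullet> ((U ** U - mat 1) *v crs n (U *v a)) = 0"
  shows "(a \<bullet> a) * trace (U ** U - mat 1) * (n \<bullet> n) - (a \<bullet> a) * (n \<bullet> ((U ** U - mat 1) *v n))
        - crs n (U *v a) \<bullet> crs n (U *v a) = - ((a \<bullet> a) * (n \<bullet> n))"
proof -
  define D0 where "D0 = U ** U - mat 1"
  define u where "u = U *v a"
  define \<alpha> where "\<alpha> = a \<bullet> a"
  define t where "t = 1 / \<alpha>"
  define M where "M = D0 - t *\<^sub>R tensor u u"
  have apos: "\<alpha> > 0" using a0 by (simp add: \<alpha>_def)
  have at: "\<alpha> * t = 1" using apos by (simp add: t_def)
  have symD0: "transpose D0 = D0" unfolding D0_def by (rule sym_sq[OF symU])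
  have symM: "transpose M = M" unfolding M_def by (rule sym_rank1[OF symD0])
  have ux: "u \<bullet> x = \<alpha>"
    using sym_dot[OF symU, of x a] Ux by (simp add: u_def \<alpha>_def inner_commute)
  have D0x: "D0 *v x = u - x"
    by (simp add: D0_def u_def matrix_vector_mult_diff_rdistrib mat_mv matrix_vector_mul_assoc[symmetric] Ux)
  have Mx: "M *v x = - x"
  proof -
    have "M *v x = u - x - (t * \<alpha>) *\<^sub>R u"
      by (simp add: M_def matrix_vector_mult_diff_rdistrib smat_mv tensor_mv D0x ux)
    then show ?thesis using at by (simp add: mult.commute)
  qed
  define y where "y = crs n x"
  have x0: "x \<noteq> 0" using Ux a0 by auto
  have xx: "x \<bullet> x > 0" using x0 by simp
  have cxy: "crs x y = (x \<bullet> x) *\<^sub>R n" using crs_facts(3)[of x n] nx by (simp add: y_def inner_commute)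
  have xMx: "x \<bullet> (M *v x) = - (x \<bullet> x)" by (simp add: Mx)
  have xMy: "x \<bullet> (M *v y) = 0"
    using sym_dot[OF symM, of x y] Mx crs_facts(2)[of x n] by (simp add: y_def inner_commute)
  have "(x \<bullet> x)^2 * (n \<bullet> (cof3 M *v n)) = crs x y \<bullet> (cof3 M *v crs x y)"
    by (simp add: cxy matrix_vector_mult_scaleR power2_eq_square)
  also have "\<dots> = (x \<bullet> (M *v x)) * (y \<bullet> (M *v y)) - (x \<bullet> (M *v y))^2" by (rule binet[OF symM])
  finally have b: "(x \<bullet> x)^2 * (n \<bullet> (cof3 M *v n)) = - (x \<bullet> x) * (y \<bullet> (M *v y))"
    using xMx xMy by simp
  have "\<alpha> * (n \<bullet> (cof3 M *v n)) = \<alpha> * (n \<bullet> (cof3 D0 *v n)) - (\<alpha> * t) * (crs n u \<bullet> (D0 *v crs n u))"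
    unfolding M_def cof_rank1[OF symD0] by (simp add: algebra_simps)
  also have "\<dots> = 0" using g2 at by (simp add: D0_def u_def \<alpha>_def)
  finally have "n \<bullet> (cof3 M *v n) = 0" using apos by simp
  then have yMy: "y \<bullet> (M *v y) = 0" using b xx by simp
  have "y \<bullet> (M *v y) = ((n \<bullet> n) * (x \<bullet> x) - (n \<bullet> x)^2) * trace M - (x \<bullet> x) * (n \<bullet> (M *v n))
     - (n \<bullet> n) * (x \<bullet> (M *v x)) + 2 * (n \<bullet> x) * (n \<bullet> (M *v x))"
    unfolding y_def by (rule tr_frame[OF symM])
  then have "0 = (x \<bullet> x) * ((n \<bullet> n) * trace M - n \<bullet> (M *v n) + (n \<bullet> n))"
    using yMy nx xMx by (simp add: algebra_simps)
  then have tm: "(n \<bullet> n) * trace M - n \<bullet> (M *v n) = - (n \<bullet> n)" using xx by simp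
  have "(n \<bullet> n) * trace M - n \<bullet> (M *v n) = (n \<bullet> n) * trace D0 - n \<bullet> (D0 *v n) - t * (crs n u \<bullet> crs n u)"
    unfolding M_def by (rule tr_rank1)
  then have E: "(n \<bullet> n) * trace D0 - n \<bullet> (D0 *v n) - t * (crs n u \<bullet> crs n u) = - (n \<bullet> n)"
    using tm by linarith
  have "\<alpha> * ((n \<bullet> n) * trace D0 - n \<bullet> (D0 *v n) - t * (crs n u \<bullet> crs n u)) = \<alpha> * (- (n \<bullet> n))"
    using E by simp
  then have "\<alpha> * ((n \<bullet> n) * trace D0 - n \<bullet> (D0 *v n)) - (\<alpha> * t) * (crs n u \<bullet> crs n u) = - (\<alpha> * (n \<bullet> n))"
    by (simp add: algebra_simps)
  then show ?thesis using at by (simp add: D0_def u_def \<alpha>_def algebra_simps)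
qed

lemma mul_tensor: "U ** tensor x n = tensor (U *v x) n" for U :: "real^3^3" and x n :: "real^3"
  by (simp add: M3 algebra_simps)

lemma tensor_scale: "tensor (f *\<^sub>R x) n = f *\<^sub>R tensor x (n::real^3)" for x :: "real^3"
  by (simp add: M3 algebra_simps)

theorem theorem1:
  fixes U :: "real^3^3" and e a n :: "real^3" and Rh :: "real^3^3"
  assumes "sym_posdef U"
    and "norm e = 1"
    and "Rh \<in> SO3"
    and "a \<noteq> 0" and "n \<noteq> 0"
    and "Rh ** ((- mat 1 + 2 *\<^sub>R tensor e e) ** U ** (- mat 1 + 2 *\<^sub>R tensor e e))
           = U + tensor a n"
  shows "(\<forall>f \<in> {0..1::real}. \<exists>R \<in> SO3. \<exists>b m :: real^3.
            R ** (f *\<^sub>R (U + tensor a n) + (1 - f) *\<^sub>R U) - mat 1 = tensor b m)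
    \<longleftrightarrow> (middle_eigenvalue U = 1
         \<and> a \<bullet> ((U ** cof3 (U ** U - mat 1)) *v n) = 0
         \<and> trace (U ** U) - det (U ** U) - (norm a)\<^sup>2 * (norm n)\<^sup>2 / 4 - 2 \<ge> 0)"
proof -
  note pd = assms(1)
  have symU: "transpose U = U" using pd by (simp add: sym_posdef_def)
  have dU: "det U > 0" using ME(1)[OF pd] .
  define Q where "Q = - mat 1 + 2 *\<^sub>R tensor e e"
  have ee: "e \<bullet> e = 1" using assms(2) by (metis power2_norm_eq_inner power_one)
  have QQ: "Q ** Q = mat 1" using Q_sq[of e] ee by (simp add: Q_def)
  have symQ: "transpose Q = Q" unfolding Q_def by (rule Q_sym)
  define Uh where "Uh = Q ** U ** Q"
  have tw: "Rh ** Uh = U + tensor a n" using assms(6) by (simp add: Uh_def Q_def)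
  have RhRh: "transpose Rh ** Rh = mat 1" and dRh: "det Rh = 1"
    using assms(3) by (simp_all add: SO3_def orthogonal_matrix)
  have symUh: "transpose Uh = Uh" by (simp add: Uh_def matrix_transpose_mul symQ symU matrix_mul_assoc)
  have dQQ: "det Q * det Q = 1" using arg_cong[OF QQ, of det] by (simp add: det_mul)
  have dUh: "det Uh = det U"
  proof -
    have "det Uh = det Q * det U * det Q" by (simp add: Uh_def det_mul)
    then show ?thesis using dQQ by (metis mult.commute mult.left_commute mult.right_neutral)
  qed
  have T1: "det (U + tensor a n) = det U" using arg_cong[OF tw, of det] dRh dUh by (simp add: det_mul)
  have T2: "transpose (U + tensor a n) ** (U + tensor a n) = Uh ** Uh"
  proof -
    have "transpose (Rh ** Uh) ** (Rh ** Uh) = transpose Uh ** (transpose Rh ** Rh) ** Uh"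
      by (simp add: matrix_transpose_mul matrix_mul_assoc)
    then show ?thesis using tw RhRh symUh by simp
  qed
  define D0 where "D0 = U ** U - mat 1"
  have symD0: "transpose D0 = D0" unfolding D0_def by (rule sym_sq[OF symU])
  have T3: "Uh ** Uh - mat 1 = Q ** D0 ** Q"
  proof -
    have "Uh ** Uh = Q ** (U ** U) ** Q"
      by (simp add: Uh_def matrix_mul_assoc) (metis QQ matrix_mul_assoc matrix_mul_rid)
    moreover have "Q ** D0 ** Q = Q ** (U ** U) ** Q - Q ** Q"
      by (simp add: D0_def mdl mdr mmat)
    ultimately show ?thesis using QQ by simp
  qed
  have inv1: "det (Uh ** Uh - mat 1) = det D0" "sig2 (Uh ** Uh - mat 1) = sig2 D0"
    using coef_eq[of "Uh ** Uh - mat 1" D0] conj_char[OF QQ, of D0] unfolding T3 by auto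
  obtain Ui where Ui: "U ** Ui = mat 1"
    using dU invertible_det_nz[of U] invertible_right_inverse by (metis less_irrefl)
  define x where "x = Ui *v a"
  have Ux: "U *v x = a" by (simp add: x_def matrix_vector_mul_assoc Ui)
  have tAn: "tensor a n = U ** tensor x n" by (simp add: mul_tensor Ux)
  have nx: "n \<bullet> x = 0"
  proof -
    have "U + tensor a n = U ** (mat 1 + tensor x n)" by (simp add: tAn matrix_add_ldistrib)
    then have "det (U + tensor a n) = det U * (1 + x \<bullet> n)" by (simp add: det_mul det_id_tensor)
    then show ?thesis using T1 dU by (simp add: inner_commute)
  qed
  define F where "F f = U + f *\<^sub>R tensor a n" for f
  have Fdet: "det (F f) > 0" for f
  proof -
    have "F f = U ** (mat 1 + tensor (f *\<^sub>R x) n)"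
      by (simp add: F_def tAn matrix_add_ldistrib tensor_scale msc)
    then have "det (F f) = det U * (1 + (f *\<^sub>R x) \<bullet> n)" by (simp add: det_mul det_id_tensor)
    then show ?thesis using dU nx by (simp add: inner_commute)
  qed
  have Fstmt: "f *\<^sub>R (U + tensor a n) + (1 - f) *\<^sub>R U = F f" for f
    by (simp add: F_def algebra_simps)
  define u where "u = U *v a"
  define \<alpha> where "\<alpha> = a \<bullet> a"
  define g0 where "g0 = det D0"
  define g1 where "g1 = 2 * (u \<bullet> (cof3 D0 *v n))"
  define g2 where "g2 = \<alpha> * (n \<bullet> (cof3 D0 *v n)) - crs n u \<bullet> (D0 *v crs n u)"
  define h0 where "h0 = sig2 D0"
  define h1 where "h1 = 2 * trace D0 * (n \<bullet> u) - 2 * (n \<bullet> (D0 *v u))"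
  define h2 where "h2 = \<alpha> * trace D0 * (n \<bullet> n) - \<alpha> * (n \<bullet> (D0 *v n)) - crs n u \<bullet> crs n u"
  have Cfe: "transpose (F f) ** F f - mat 1 = D0 + tensor n (f *\<^sub>R u + (f^2 * \<alpha> / 2) *\<^sub>R n)
      + tensor (f *\<^sub>R u + (f^2 * \<alpha> / 2) *\<^sub>R n) n" for f
    using Cf[OF symU, of f a n] by (simp add: F_def D0_def u_def \<alpha>_def)
  have gf: "det (transpose (F f) ** F f - mat 1) = g0 + f * g1 + f^2 * g2" for f
    unfolding Cfe g_expand[OF symD0] g0_def g1_def g2_def by simp
  have hf: "sig2 (transpose (F f) ** F f - mat 1) = h0 + f * h1 + f^2 * h2" for f
    unfolding Cfe h_expand[OF symD0] h0_def h1_def h2_def by simp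
  have F1: "transpose (F 1) ** F 1 - mat 1 = Uh ** Uh - mat 1" using T2 by (simp add: F_def)
  have g12: "g1 + g2 = 0" using gf[of 1] inv1(1) unfolding F1 g0_def by simp
  have h12: "h1 + h2 = 0" using hf[of 1] inv1(2) unfolding F1 h0_def by simp
  have LHS: "(\<forall>f \<in> {0..1::real}. \<exists>R \<in> SO3. \<exists>b m :: real^3.
            R ** (f *\<^sub>R (U + tensor a n) + (1 - f) *\<^sub>R U) - mat 1 = tensor b m)
        \<longleftrightarrow> (\<forall>f \<in> {0..1::real}. g0 + f * g1 + f^2 * g2 = 0 \<and> h0 + f * h1 + f^2 * h2 \<le> 0)"
  proof -
    have "(\<exists>R \<in> SO3. \<exists>b m :: real^3. R ** F f - mat 1 = tensor b m)
        \<longleftrightarrow> g0 + f * g1 + f^2 * g2 = 0 \<and> h0 + f * h1 + f^2 * h2 \<le> 0" for f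
      using bj1[of _ "F f"] bj2[OF Fdet[of f]] gf[of f] hf[of f] by metis
    then show ?thesis unfolding Fstmt by simp
  qed
  have CC1: "middle_eigenvalue U = 1 \<longleftrightarrow> g0 = 0 \<and> h0 \<le> 0"
    using ME(2)[OF pd] by (simp add: g0_def h0_def D0_def)
  have CC2: "a \<bullet> ((U ** cof3 (U ** U - mat 1)) *v n) = g1 / 2"
    using sym_dot[OF symU, of a "cof3 D0 *v n"]
    by (simp add: g1_def u_def D0_def matrix_vector_mul_assoc[symmetric] inner_commute)
  have nn: "(norm a)\<^sup>2 * (norm n)\<^sup>2 = \<alpha> * (n \<bullet> n)" by (simp add: \<alpha>_def power2_norm_eq_inner)
  have CC3: "g0 = 0 \<Longrightarrow> (trace (U ** U) - det (U ** U) - (norm a)\<^sup>2 * (norm n)\<^sup>2 / 4 - 2 \<ge> 0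
      \<longleftrightarrow> h0 + \<alpha> * (n \<bullet> n) / 4 \<le> 0)"
    using cc3_id[of "U ** U"] unfolding nn h0_def g0_def D0_def by auto
  have key: "g2 = 0 \<Longrightarrow> h2 = - (\<alpha> * (n \<bullet> n))"
    using key_h2[OF symU Ux nx assms(4)] unfolding g2_def h2_def D0_def u_def \<alpha>_def by simp
  have K0: "\<alpha> * (n \<bullet> n) \<ge> 0" by (simp add: \<alpha>_def)
  show ?thesis unfolding LHS CC2
  proof
    assume H: "\<forall>f \<in> {0..1::real}. g0 + f * g1 + f^2 * g2 = 0 \<and> h0 + f * h1 + f^2 * h2 \<le> 0"
    have H0: "g0 = 0" "h0 \<le> 0" using H[rule_format, of 0] by simp_all
    have Hh: "g0 + g1 / 2 + g2 / 4 = 0" "h0 + h1 / 2 + h2 / 4 \<le> 0"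
      using H[rule_format, of "1/2"] by (simp_all add: power2_eq_square)
    have "g1 = 0" using Hh(1) H0(1) g12 by linarith
    moreover have "g2 = 0" using \<open>g1 = 0\<close> g12 by simp
    ultimately have "h2 = - (\<alpha> * (n \<bullet> n))" using key by simp
    then have "h0 + \<alpha> * (n \<bullet> n) / 4 \<le> 0" using Hh(2) h12 by linarith
    then show "middle_eigenvalue U = 1 \<and> g1 / 2 = 0 \<and> trace (U ** U) - det (U ** U) - (norm a)\<^sup>2 * (norm n)\<^sup>2 / 4 - 2 \<ge> 0"
      using CC1 CC3 H0 \<open>g1 = 0\<close> by simp
  next
    assume H: "middle_eigenvalue U = 1 \<and> g1 / 2 = 0 \<and> trace (U ** U) - det (U ** U) - (norm a)\<^sup>2 * (norm n)\<^sup>2 / 4 - 2 \<ge> 0"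
    have H0: "g0 = 0" "h0 \<le> 0" "g1 = 0" using H CC1 by simp_all
    have H3: "h0 + \<alpha> * (n \<bullet> n) / 4 \<le> 0" using H CC3[OF H0(1)] by simp
    have g2: "g2 = 0" using H0(3) g12 by simp
    have h2: "h2 = - (\<alpha> * (n \<bullet> n))" using key g2 by simp
    have h1: "h1 = \<alpha> * (n \<bullet> n)" using h2 h12 by simp
    show "\<forall>f \<in> {0..1::real}. g0 + f * g1 + f^2 * g2 = 0 \<and> h0 + f * h1 + f^2 * h2 \<le> 0"
    proof
      fix f :: real assume "f \<in> {0..1}"
      have q: "f - f^2 \<le> 1/4"
      proof -
        have "0 \<le> (f - 1/2)^2" by simp
        then show ?thesis by (simp add: power2_eq_square algebra_simps)
      qed
      have "\<alpha> * (n \<bullet> n) * (f - f^2) \<le> \<alpha> * (n \<bullet> n) * (1/4)" using mult_left_mono[OF q K0] .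
      then have "h0 + f * h1 + f^2 * h2 \<le> h0 + \<alpha> * (n \<bullet> n) / 4"
        using h1 h2 by (simp add: algebra_simps)
      then show "g0 + f * g1 + f^2 * g2 = 0 \<and> h0 + f * h1 + f^2 * h2 \<le> 0"
        using H0 g2 H3 by simp
    qed
  qed
qed

end
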